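(* Let $q,d\ge1$ and $\mathcal{D}=\{(b_{\lambda_1},B_{\lambda_1}),\ldots,(b_{\lambda_d},B_{\lambda_d})\}\subseteq[q]\times2^{[q]}$ with $|B_{\lambda_i}|\ge2$ for all $i$. Let $B$ be a nonempty subset of $[q]$, $b\in{\sf Base}(\mathcal{D})$, and $T_{(b,B)}$ the $\mathcal{D}$-decision tree relative to $(b,B)$. If $b'$ is the label of a good vertex of even height of $T_{(b,B)}$, then $(b',B)\in\overline{\mathcal{D}}$.
   Context: Here $\lambda_1,\dots,\lambda_d$ are $d$ distinct index symbols, ${\sf Base}(\mathcal{D})=\{b_{\lambda_1},\dots,b_{\lambda_d}\}$, and for $b'\in{\sf Base}(\mathcal{D})$, $\nu(b')=\{\lambda_i:i\in[d],\ b_{\lambda_i}=b'\}$. Closure: with $\Lambda=[q]$, $(c,C)^{\sf ex}=\{(c,C'):C\subseteq C'\subseteq\Lambda\}$; $(c,C)\circ(e,E)=(c,(C\smallsetminus\{e\})\cup E)$; $\mathcal{D}^\circ$ is the set of all compositions $(c_1,C_1)\circ\cdots\circ(c_s,C_s)$, $s\ge1$, $(c_i,C_i)\in\mathcal{D}$, with all possible bracketings; $\mathcal{D}^{\sf ex}$ the union of extensions of elements of $\mathcal{D}$; $\Lambda^{\sf triv}=\{(c,C):c\in C\}$; $\overline{\mathcal{D}}=(\mathcal{D}^\circ)^{\sf ex}\cup\Lambda^{\sf triv}$. Decision tree $T_{(b,B)}$: a rooted labeled tree built as follows. The root (height $0$) is labeled $b$. For $k=1,2,\ldots$: every vertex of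 height $2k-2$, with label $b'\in{\sf Base}(\mathcal{D})$, receives one child labeled $\lambda_i$ for each $\lambda_i\in\nu(b')$; then every vertex $v$ of height $2k-1$, with label $\lambda_i$, is treated as follows, where $C(v)$ is the set of labels of the ancestors of $v$ of even height: if $\emptyset\ne B_{\lambda_i}\smallsetminus B\subseteq{\sf Base}(\mathcal{D})\smallsetminus C(v)$, $v$ receives one child labeled $b''$ for each $b''\in B_{\lambda_i}\smallsetminus B$; otherwise $v$ is a leaf. (The process terminates; all leaves have odd height.) Good/bad vertices, defined from the leaves upward: a leaf labeled $\lambda_i$ is good iff $B_{\lambda_i}\subseteq B$; a vertex of even height is good iff at least one of its children is good; a non-leaf vertex of odd height is good iff all its children are good. Vertices that are not good are bad. *)

theory Defs
  imports Main
begin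

text \<open>Ground set [q] = {1..q}. The family D is given by index symbols i in {1..d}
  (playing the role of lambda_i) with base points bD i and sets BD i.\<close>

definition Lam :: "nat \<Rightarrow> nat set" where
  "Lam q = {1..q}"

definition Dfam :: "nat \<Rightarrow> (nat \<Rightarrow> nat) \<Rightarrow> (nat \<Rightarrow> nat set) \<Rightarrow> (nat \<times> nat set) set" where
  "Dfam d bD BD = (\<lambda>i. (bD i, BD i)) ` {1..d}"

definition Base :: "nat \<Rightarrow> (nat \<Rightarrow> nat) \<Rightarrow> nat set" where
  "Base d bD = bD ` {1..d}"

definition nu :: "nat \<Rightarrow> (nat \<Rightarrow> nat) \<Rightarrow> nat \<Rightarrow> nat set" where
  "nu d bD b' = {i \<in> {1..d}. bD i = b'}"

definition comp :: "nat \<times> nat set \<Rightarrow> nat \<times> nat set \<Rightarrow> nat \<times> nat set" where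
  "comp x y = (fst x, (snd x - {fst y}) \<union> snd y)"

inductive_set comp_closure :: "(nat \<times> nat set) set \<Rightarrow> (nat \<times> nat set) set"
  for D :: "(nat \<times> nat set) set" where
  base: "x \<in> D \<Longrightarrow> x \<in> comp_closure D"
| comp: "x \<in> comp_closure D \<Longrightarrow> y \<in> comp_closure D \<Longrightarrow> comp x y \<in> comp_closure D"

definition ext :: "nat set \<Rightarrow> (nat \<times> nat set) set \<Rightarrow> (nat \<times> nat set) set" where
  "ext \<Lambda> S = {(c, C'). \<exists>C. (c, C) \<in> S \<and> C \<subseteq> C' \<and> C' \<subseteq> \<Lambda>}"

definition triv :: "nat set \<Rightarrow> (nat \<times> nat set) set" where
  "triv \<Lambda> = {(c, C). c \<in> C \<and> C \<subseteq> \<Lambda>}"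

definition closure :: "nat \<Rightarrow> (nat \<times> nat set) set \<Rightarrow> (nat \<times> nat set) set" where
  "closure q D = ext (Lam q) (comp_closure D) \<union> triv (Lam q)"

text \<open>A vertex of even height 2k is identified by its path from the root,
  a list [(i1,b1),...,(ik,bk)] of the labels of the odd/even vertices below the root;
  its label is b (root) or bk. A vertex of odd height is a pair (p,i) of its even parent p
  and its label i. C(p,i) is the set of labels of even ancestors of (p,i).\<close>

definition lbl :: "nat \<Rightarrow> (nat \<times> nat) list \<Rightarrow> nat" where
  "lbl b p = (if p = [] then b else snd (last p))"

definition Cset :: "nat \<Rightarrow> (nat \<times> nat) list \<Rightarrow> nat set" where
  "Cset b p = insert b (snd ` set p)"

text \<open>Condition for the odd vertex (p,i) to have children (i.e. not be a leaf).\<close>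
definition expands :: "nat \<Rightarrow> (nat \<Rightarrow> nat) \<Rightarrow> (nat \<Rightarrow> nat set) \<Rightarrow> nat set \<Rightarrow> nat
    \<Rightarrow> (nat \<times> nat) list \<Rightarrow> nat \<Rightarrow> bool" where
  "expands d bD BD B b p i \<longleftrightarrow>
     BD i - B \<noteq> {} \<and> BD i - B \<subseteq> Base d bD - Cset b p"

inductive even_vtx :: "nat \<Rightarrow> (nat \<Rightarrow> nat) \<Rightarrow> (nat \<Rightarrow> nat set) \<Rightarrow> nat set \<Rightarrow> nat
    \<Rightarrow> (nat \<times> nat) list \<Rightarrow> bool"
  for d bD BD B b where
  root: "even_vtx d bD BD B b []"
| step: "even_vtx d bD BD B b p \<Longrightarrow> i \<in> nu d bD (lbl b p) \<Longrightarrow>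
         expands d bD BD B b p i \<Longrightarrow> b'' \<in> BD i - B \<Longrightarrow>
         even_vtx d bD BD B b (p @ [(i, b'')])"

definition odd_vtx :: "nat \<Rightarrow> (nat \<Rightarrow> nat) \<Rightarrow> (nat \<Rightarrow> nat set) \<Rightarrow> nat set \<Rightarrow> nat
    \<Rightarrow> (nat \<times> nat) list \<Rightarrow> nat \<Rightarrow> bool" where
  "odd_vtx d bD BD B b p i \<longleftrightarrow> even_vtx d bD BD B b p \<and> i \<in> nu d bD (lbl b p)"

text \<open>Good vertices (the tree is finite, so the inductive definition coincides
  with the bottom-up definition).\<close>
inductive good_even and good_odd
  for d :: nat and bD :: "nat \<Rightarrow> nat" and BD :: "nat \<Rightarrow> nat set" and B :: "nat set" and b :: nat
  where
  leaf: "odd_vtx d bD BD B b p i \<Longrightarrow> \<not> expands d bD BD B b p i \<Longrightarrow> BD i \<subseteq> B \<Longrightarrow>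
         good_odd d bD BD B b p i"
| node: "odd_vtx d bD BD B b p i \<Longrightarrow> expands d bD BD B b p i \<Longrightarrow>
         (\<forall>b''\<in>BD i - B. good_even d bD BD B b (p @ [(i, b'')])) \<Longrightarrow>
         good_odd d bD BD B b p i"
| even: "even_vtx d bD BD B b p \<Longrightarrow> good_odd d bD BD B b p i \<Longrightarrow>
         good_even d bD BD B b p"

end

theory Submission
  imports Defs
begin

lemma comp_many:
  assumes "finite S" "(c, X) \<in> comp_closure D"
    and "\<forall>s\<in>S. s \<notin> B \<and> (\<exists>C. C \<subseteq> B \<and> (s, C) \<in> comp_closure D)"
  shows "\<exists>Y. (c, Y) \<in> comp_closure D \<and> Y \<subseteq> (X - S) \<union> B"
  using assms
proof (induction S rule: finite_induct)
  case empty
  then show ?case by blast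
next
  case (insert s S)
  then obtain Y where Y: "(c, Y) \<in> comp_closure D" "Y \<subseteq> (X - S) \<union> B" by auto
  from insert.prems obtain C where C: "C \<subseteq> B" "(s, C) \<in> comp_closure D" "s \<notin> B" by auto
  have "comp (c, Y) (s, C) \<in> comp_closure D"
    using Y(1) C(2) by (rule comp_closure.comp)
  moreover have "comp (c, Y) (s, C) = (c, (Y - {s}) \<union> C)" by (simp add: comp_def)
  moreover have "(Y - {s}) \<union> C \<subseteq> (X - insert s S) \<union> B" using Y(2) C by auto
  ultimately show ?case by auto
qed

theorem lemma3p8:
  fixes q d :: nat and bD :: "nat \<Rightarrow> nat" and BD :: "nat \<Rightarrow> nat set"
    and B :: "nat set" and b :: nat and p :: "(nat \<times> nat) list"
  assumes "q \<ge> 1" and "d \<ge> 1"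
    and "\<forall>i\<in>{1..d}. bD i \<in> {1..q} \<and> BD i \<subseteq> {1..q} \<and> card (BD i) \<ge> 2"
    and "B \<noteq> {}" and "B \<subseteq> {1..q}"
    and "b \<in> Base d bD"
    and "good_even d bD BD B b p"
  shows "(lbl b p, B) \<in> closure q (Dfam d bD BD)"
proof -
  let ?D = "Dfam d bD BD"
  have "good_even d bD BD B b p \<Longrightarrow> (lbl b p, B) \<in> closure q ?D"
    and "good_odd d bD BD B b p' i \<Longrightarrow> (bD i, B) \<in> closure q ?D" for p p' i
  proof (induction rule: good_even_good_odd.inducts)
    case (leaf p i)
    then have i: "i \<in> {1..d}" by (simp add: odd_vtx_def nu_def)
    then have "(bD i, BD i) \<in> comp_closure ?D"
      by (intro comp_closure.base) (auto simp: Dfam_def)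
    then show ?case using leaf assms(5)
      by (auto simp: closure_def ext_def Lam_def)
  next
    case (node p i)
    then have i: "i \<in> {1..d}" by (simp add: odd_vtx_def nu_def)
    then have fin: "finite (BD i)" using assms(3)
      by (metis card.infinite not_numeral_le_zero)
    have base: "(bD i, BD i) \<in> comp_closure ?D"
      using i by (intro comp_closure.base) (auto simp: Dfam_def)
    have "\<forall>s\<in>BD i - B. s \<notin> B \<and> (\<exists>C. C \<subseteq> B \<and> (s, C) \<in> comp_closure ?D)"
    proof
      fix s assume s: "s \<in> BD i - B"
      then have "(s, B) \<in> closure q ?D" using node.IH by (simp add: lbl_def)
      then show "s \<notin> B \<and> (\<exists>C. C \<subseteq> B \<and> (s, C) \<in> comp_closure ?D)"
        using s by (auto simp: closure_def ext_def triv_def)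
    qed
    from comp_many[OF _ base this] fin obtain Y where
      Y: "(bD i, Y) \<in> comp_closure ?D" "Y \<subseteq> (BD i - (BD i - B)) \<union> B" by auto
    then have "Y \<subseteq> B" by auto
    then show ?case using Y(1) assms(5)
      by (auto simp: closure_def ext_def Lam_def)
  next
    case (even p i)
    from even(2) have "odd_vtx d bD BD B b p i"
      by (cases rule: good_odd.cases) auto
    then have "bD i = lbl b p" by (simp add: odd_vtx_def nu_def)
    then show ?case using even by simp
  qed
  then show ?thesis using assms(7) by blast

qed

end
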